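(* Let $G$ be a finite abelian group. If $B\subset G$ is an irreducible balanced set, then $|B|\geqslant\log_2(\mathrm{minspan}(B))+1$.
   Context: A set $B\subset G$ is balanced if for every $b\in B$ there exist distinct $b_1,b_2\in B$ with $2b=b_1+b_2$. A balanced set $B$ is irreducible if it does not contain two disjoint balanced subsets. For $C\subset G$, $\mathrm{minspan}(C)=\min_{g\in G}|\langle C+g\rangle|$, where $\langle X\rangle$ is the subgroup generated by $X$. *)

theory Defs
  imports Complex_Main
begin

definition is_subgroup :: "'a::ab_group_add set \<Rightarrow> bool" where
  "is_subgroup H \<longleftrightarrow> 0 \<in> H \<and> (\<forall>x\<in>H. \<forall>y\<in>H. x + y \<in> H) \<and> (\<forall>x\<in>H. - x \<in> H)"

definition gen_subgroup :: "'a::ab_group_add set \<Rightarrow> 'a set" where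
  "gen_subgroup X = \<Inter>{H. is_subgroup H \<and> X \<subseteq> H}"

definition balanced :: "'a::ab_group_add set \<Rightarrow> bool" where
  "balanced B \<longleftrightarrow> B \<noteq> {} \<and>
     (\<forall>b\<in>B. \<exists>b1\<in>B. \<exists>b2\<in>B. b1 \<noteq> b2 \<and> b + b = b1 + b2)"

definition irreducible_balanced :: "'a::ab_group_add set \<Rightarrow> bool" where
  "irreducible_balanced B \<longleftrightarrow> balanced B \<and>
     \<not> (\<exists>B1 B2. B1 \<subseteq> B \<and> B2 \<subseteq> B \<and> B1 \<inter> B2 = {} \<and> balanced B1 \<and> balanced B2)"

definition minspan :: "'a::{ab_group_add,finite} set \<Rightarrow> nat" where
  "minspan C = (LEAST n. \<exists>g. n = card (gen_subgroup ((\<lambda>c. c + g) ` C)))"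

end

theory Submission
  imports Defs "HOL-Library.Multiset"
begin

definition mval :: "'a::ab_group_add \<Rightarrow> 'a multiset \<Rightarrow> 'a" where
  "mval r M = sum_mset (image_mset (\<lambda>v. v - r) M)"

lemma mval_plus: "mval r (M + N) = mval r M + mval r N"
  by (simp add: mval_def)

lemma mval_empty: "mval r {#} = 0"
  by (simp add: mval_def)

lemma neg_in_finite:
  fixes x :: "'a::{ab_group_add,finite}" and f :: "nat \<Rightarrow> 'a"
  assumes "\<And>n. f n \<in> V" "\<And>m n. f (m + n) = f m + f n" "f 1 = x"
  shows "- x \<in> V"
proof -
  have "\<not> inj f"
  proof
    assume "inj f"
    have "finite (range f)" by simp
    show False using finite_imageD[OF \<open>finite (range f)\<close> \<open>inj f\<close>] by simp
  qed
  then obtain i j where ij: "f i = f j" "i \<noteq> j" unfolding inj_def by blast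
  then obtain i j where ij: "f i = f j" "i < j"
    by (metis nat_neq_iff)
  then obtain d where d: "j = i + Suc d" by (metis less_iff_Suc_add add_Suc_right)
  have "f j = f i + f (Suc d)" using d assms(2)[of i "Suc d"] by simp
  hence "f (Suc d) = 0" using ij by simp
  hence "f d + x = 0" using assms(2)[of d 1] assms(3) by simp
  hence "- x = f d" by (metis add_eq_0_iff2)
  thus ?thesis using assms(1) by simp
qed

lemma set_repeat_sub: "set_mset (repeat_mset n M) \<subseteq> set_mset M"
  by (induct n) auto

lemma gen_sub_mval:
  fixes B :: "'a::{ab_group_add,finite} set"
  shows "gen_subgroup ((\<lambda>c. c + - r) ` B) \<subseteq> {mval r M | M. set_mset M \<subseteq> B}"
proof -
  let ?V = "{mval r M | M. set_mset M \<subseteq> B}"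
  have "is_subgroup ?V"
    unfolding is_subgroup_def
  proof (intro conjI ballI)
    show "0 \<in> ?V" using mval_empty[of r] by (metis (mono_tags, lifting) empty_subsetI mem_Collect_eq set_mset_empty)
  next
    fix x y assume "x \<in> ?V" "y \<in> ?V"
    then obtain M N where "x = mval r M" "set_mset M \<subseteq> B" "y = mval r N" "set_mset N \<subseteq> B" by blast
    thus "x + y \<in> ?V" by (metis (mono_tags, lifting) mval_plus Un_subset_iff mem_Collect_eq set_mset_union)
  next
    fix x assume "x \<in> ?V"
    then obtain M where M: "x = mval r M" "set_mset M \<subseteq> B" by blast
    show "- x \<in> ?V"
    proof (rule neg_in_finite[where f = "\<lambda>n. mval r (repeat_mset n M)"])
      fix n show "mval r (repeat_mset n M) \<in> ?V" using set_repeat_sub[of n M] M(2) by blast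
    next
      fix m n show "mval r (repeat_mset (m + n) M) = mval r (repeat_mset m M) + mval r (repeat_mset n M)"
        by (simp add: repeat_mset_distrib mval_plus)
    next
      show "mval r (repeat_mset 1 M) = x" using M(1) by (simp add: mval_plus)
    qed
  qed
  moreover have "(\<lambda>c. c + - r) ` B \<subseteq> ?V"
  proof
    fix y assume "y \<in> (\<lambda>c. c + - r) ` B"
    then obtain c where "c \<in> B" "y = c + - r" by blast
    hence "y = mval r {#c#}" "set_mset {#c#} \<subseteq> B" by (auto simp: mval_def)
    thus "y \<in> ?V" by blast
  qed
  ultimately show ?thesis unfolding gen_subgroup_def by blast
qed

lemma stabilize:
  fixes B :: "'a::ab_group_add set" and W :: "'a \<Rightarrow> nat"
  assumes f: "\<And>v. v \<in> B \<Longrightarrow> f1 v \<in> B \<and> f2 v \<in> B \<and> v + v = f1 v + f2 v"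
    and Wdec: "\<And>v. v \<in> B \<Longrightarrow> v \<noteq> r \<Longrightarrow> W (f1 v) + W (f2 v) < 2 * W v"
  shows "set_mset M \<subseteq> B \<Longrightarrow> \<exists>M'. set_mset M' \<subseteq> B \<and> mval r M' = mval r M \<and> (\<forall>v. v \<noteq> r \<longrightarrow> count M' v \<le> 1)"
proof (induction "sum_mset (image_mset W M)" arbitrary: M rule: less_induct)
  case less
  show ?case
  proof (cases "\<forall>v. v \<noteq> r \<longrightarrow> count M v \<le> 1")
    case True
    then show ?thesis using less.prems by blast
  next
    case False
    then obtain v where v: "v \<noteq> r" "count M v \<ge> 2" by (metis not_le Suc_leI one_add_one plus_1_eq_Suc)
    hence vB: "v \<in> B" using less.prems
      by (metis count_eq_zero_iff not_numeral_le_zero subset_iff)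
    define M0 where "M0 = M - {#v, v#}"
    have M: "M = M0 + {#v, v#}" unfolding M0_def using v(2)
      by (simp add: multiset_eq_iff)
    define M' where "M' = M0 + {#f1 v, f2 v#}"
    have sM': "set_mset M' \<subseteq> B" using less.prems f[OF vB] unfolding M'_def M
      by auto
    have "mval r M' = mval r M"
    proof -
      have "mval r {#f1 v, f2 v#} = mval r {#v, v#}" using f[OF vB] by (simp add: mval_def algebra_simps)
      thus ?thesis unfolding M'_def M by (simp only: mval_plus)
    qed
    moreover have "sum_mset (image_mset W M') < sum_mset (image_mset W M)"
      unfolding M'_def M using Wdec[OF vB v(1)] by simp
    ultimately show ?thesis using less.hyps[OF _ sM'] by metis
  qed
qed

lemma stable_val:
  assumes "\<forall>v. v \<noteq> r \<longrightarrow> count M v \<le> 1"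
  shows "mval r M = sum (\<lambda>v. v - r) (set_mset M - {r})"
proof -
  have M: "M = mset_set (set_mset M - {r}) + replicate_mset (count M r) r"
    using assms by (auto simp: multiset_eq_iff count_mset_set' le_Suc_eq) (metis count_eq_zero_iff)+
  have z: "mval r (replicate_mset n r) = 0" for n
    by (induct n) (auto simp: mval_def)
  hence "mval r (replicate_mset (count M r) r) = 0" .
  moreover have "mval r (mset_set (set_mset M - {r})) = sum (\<lambda>v. v - r) (set_mset M - {r})"
    by (simp add: mval_def sum_unfold_sum_mset)
  ultimately show ?thesis by (metis M add.right_neutral mval_plus)
qed

lemma key:
  fixes B :: "'a::{ab_group_add,finite} set" and \<rho> :: "'a \<Rightarrow> nat"
  assumes rB: "r \<in> B"
    and f: "\<And>v. v \<in> B \<Longrightarrow> f1 v \<in> B \<and> f2 v \<in> B \<and> v + v = f1 v + f2 v"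
    and r0: "\<rho> r = 0"
    and rk: "\<And>v. v \<in> B \<Longrightarrow> v \<noteq> r \<Longrightarrow> \<rho> (f1 v) < \<rho> v \<or> \<rho> (f2 v) < \<rho> v"
  shows "card (gen_subgroup ((\<lambda>c. c + - r) ` B)) \<le> 2 ^ (card B - 1)"
proof -
  define K where "K = Max (\<rho> ` B)"
  have Kge: "\<And>v. v \<in> B \<Longrightarrow> \<rho> v \<le> K" unfolding K_def by simp
  define W where "W = (\<lambda>v. (3::nat) ^ K - 3 ^ (K - \<rho> v))"
  have Wr: "W r = 0" unfolding W_def r0 by simp
  have Wdec: "W (f1 v) + W (f2 v) < 2 * W v" if vB: "v \<in> B" and vr: "v \<noteq> r" for v
  proof -
    have "\<exists>a b. {a, b} = {f1 v, f2 v} \<and> \<rho> a < \<rho> v" using rk[OF vB vr] by blast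
    then obtain a b where ab: "{a, b} = {f1 v, f2 v}" "\<rho> a < \<rho> v" by blast
    have sum_eq: "W (f1 v) + W (f2 v) = W a + W b" using ab(1)
      by (metis add.commute doubleton_eq_iff)
    have aB: "a \<in> B" and bB: "b \<in> B" using ab(1) f[OF vB] by (auto simp: doubleton_eq_iff)
    define x where "x = (3::nat) ^ (K - \<rho> v)"
    have xpos: "x > 0" unfolding x_def by simp
    have "3 * x = 3 ^ (Suc (K - \<rho> v))" unfolding x_def by simp
    also have "\<dots> \<le> 3 ^ (K - \<rho> a)" using ab(2) Kge[OF vB] by (intro power_increasing) auto
    finally have ax: "3 * x \<le> 3 ^ (K - \<rho> a)" .
    have "3 ^ (K - \<rho> a) \<le> (3::nat) ^ K" by (intro power_increasing) auto
    have "(3::nat) ^ (K - \<rho> b) > 0" by simp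
    have "3 ^ (K - \<rho> b) \<le> (3::nat) ^ K" by (intro power_increasing) auto
    have "x \<le> (3::nat) ^ K" unfolding x_def by (intro power_increasing) auto
    have "W a + W b < 2 * W v" unfolding W_def x_def[symmetric]
      using ax xpos \<open>3 ^ (K - \<rho> a) \<le> (3::nat) ^ K\<close> \<open>(3::nat) ^ (K - \<rho> b) > 0\<close>
        \<open>3 ^ (K - \<rho> b) \<le> (3::nat) ^ K\<close> \<open>x \<le> (3::nat) ^ K\<close> by linarith
    thus ?thesis using sum_eq by simp
  qed
  let ?P = "(\<lambda>S. sum (\<lambda>v. v - r) S) ` Pow (B - {r})"
  have "gen_subgroup ((\<lambda>c. c + - r) ` B) \<subseteq> ?P"
  proof
    fix y assume "y \<in> gen_subgroup ((\<lambda>c. c + - r) ` B)"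
    then obtain M where M: "y = mval r M" "set_mset M \<subseteq> B" using gen_sub_mval by blast
    obtain M' where M': "set_mset M' \<subseteq> B" "mval r M' = mval r M" "\<forall>v. v \<noteq> r \<longrightarrow> count M' v \<le> 1"
      using stabilize[of B f1 f2 r W M, OF f Wdec M(2)] by blast
    have "y = sum (\<lambda>v. v - r) (set_mset M' - {r})" using M M' stable_val by metis
    moreover have "set_mset M' - {r} \<in> Pow (B - {r})" using M'(1) by auto
    ultimately show "y \<in> ?P" by blast
  qed
  hence "card (gen_subgroup ((\<lambda>c. c + - r) ` B)) \<le> card ?P" by (intro card_mono) auto
  also have "\<dots> \<le> card (Pow (B - {r}))" by (rule card_image_le) simp
  also have "\<dots> = 2 ^ (card B - 1)" using rB by (simp add: card_Pow)
  finally show ?thesis .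
qed

primrec layer :: "('a \<Rightarrow> 'a) \<Rightarrow> ('a \<Rightarrow> 'a) \<Rightarrow> 'a set \<Rightarrow> 'a \<Rightarrow> nat \<Rightarrow> 'a set" where
  "layer f1 f2 B r 0 = {r}"
| "layer f1 f2 B r (Suc k) = layer f1 f2 B r k \<union> {v \<in> B. f1 v \<in> layer f1 f2 B r k \<or> f2 v \<in> layer f1 f2 B r k}"

definition closedf :: "('a \<Rightarrow> 'a) \<Rightarrow> ('a \<Rightarrow> 'a) \<Rightarrow> 'a set \<Rightarrow> bool" where
  "closedf f1 f2 S \<longleftrightarrow> (\<forall>v\<in>S. f1 v \<in> S \<and> f2 v \<in> S)"

lemma closed_balanced:
  fixes S :: "'a::ab_group_add set"
  assumes f: "\<And>v. v \<in> B \<Longrightarrow> f1 v \<in> B \<and> f2 v \<in> B \<and> f1 v \<noteq> f2 v \<and> v + v = f1 v + f2 v"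
    and "S \<subseteq> B" "S \<noteq> {}" "closedf f1 f2 S"
  shows "balanced S"
  unfolding balanced_def
proof (intro conjI ballI)
  show "S \<noteq> {}" by fact
  fix b assume "b \<in> S"
  hence "f1 b \<in> S" "f2 b \<in> S" "f1 b \<noteq> f2 b" "b + b = f1 b + f2 b"
    using assms unfolding closedf_def by auto
  thus "\<exists>b1\<in>S. \<exists>b2\<in>S. b1 \<noteq> b2 \<and> b + b = b1 + b2" by blast
qed

lemma root_exists:
  fixes B :: "'a::{ab_group_add,finite} set"
  assumes irr: "irreducible_balanced B"
    and f: "\<And>v. v \<in> B \<Longrightarrow> f1 v \<in> B \<and> f2 v \<in> B \<and> f1 v \<noteq> f2 v \<and> v + v = f1 v + f2 v"
  shows "\<exists>r\<in>B. \<forall>v\<in>B. \<exists>k. v \<in> layer f1 f2 B r k"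
proof -
  have Bne: "B \<noteq> {}" using irr unfolding irreducible_balanced_def balanced_def by blast
  let ?P = "\<lambda>C. C \<subseteq> B \<and> C \<noteq> {} \<and> closedf f1 f2 C"
  have "?P B" using Bne f unfolding closedf_def by blast
  then obtain C where C: "?P C" and Cmin: "\<And>C'. ?P C' \<Longrightarrow> card C \<le> card C'"
    using ex_has_least_nat[of ?P B card] by blast
  obtain r where rC: "r \<in> C" using C by blast
  have rB: "r \<in> B" using C rC by blast
  let ?U = "\<Union>k. layer f1 f2 B r k"
  show ?thesis
  proof (rule bexI[OF _ rB], rule ccontr)
    assume "\<not> (\<forall>v\<in>B. \<exists>k. v \<in> layer f1 f2 B r k)"
    hence Dne: "B - ?U \<noteq> {}" by blast
    have Dcl: "closedf f1 f2 (B - ?U)" unfolding closedf_def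
    proof (intro ballI conjI)
      fix v assume v: "v \<in> B - ?U"
      show "f1 v \<in> B - ?U"
      proof (rule ccontr)
        assume "f1 v \<notin> B - ?U"
        then obtain k where "f1 v \<in> layer f1 f2 B r k" using f v by blast
        hence "v \<in> layer f1 f2 B r (Suc k)" using v by simp
        thus False using v by blast
      qed
      show "f2 v \<in> B - ?U"
      proof (rule ccontr)
        assume "f2 v \<notin> B - ?U"
        then obtain k where "f2 v \<in> layer f1 f2 B r k" using f v by blast
        hence "v \<in> layer f1 f2 B r (Suc k)" using v by simp
        thus False using v by blast
      qed
    qed
    have rU: "r \<in> ?U" by (rule UN_I[of 0]) auto
    show False
    proof (cases "C \<inter> (B - ?U) = {}")
      case True
      have "balanced C" using closed_balanced[OF f] C by blast
      moreover have "balanced (B - ?U)" using closed_balanced[OF f, of "B - ?U"] Dne Dcl by blast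
      ultimately show False using irr True C unfolding irreducible_balanced_def by blast
    next
      case False
      have "?P (C \<inter> (B - ?U))" using False C Dcl unfolding closedf_def by blast
      hence "card C \<le> card (C \<inter> (B - ?U))" by (rule Cmin)
      hence "C \<inter> (B - ?U) = C" by (intro card_seteq) auto
      thus False using rC rU by blast
    qed
  qed
qed

theorem corollary4p7:
  fixes B :: "'a::{ab_group_add,finite} set"
  assumes "irreducible_balanced B"
  shows "real (card B) \<ge> log 2 (real (minspan B)) + 1"
proof -
  have bal: "balanced B" using assms unfolding irreducible_balanced_def by blast
  have "\<forall>b\<in>B. \<exists>p. fst p \<in> B \<and> snd p \<in> B \<and> fst p \<noteq> snd p \<and> b + b = fst p + snd p"
  proof
    fix b assume "b \<in> B"
    then obtain b1 b2 where "b1 \<in> B" "b2 \<in> B" "b1 \<noteq> b2" "b + b = b1 + b2"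
      using bal unfolding balanced_def by blast
    thus "\<exists>p. fst p \<in> B \<and> snd p \<in> B \<and> fst p \<noteq> snd p \<and> b + b = fst p + snd p"
      by (intro exI[of _ "(b1, b2)"]) simp
  qed
  from bchoice[OF this] obtain F where F: "\<forall>b\<in>B. fst (F b) \<in> B \<and> snd (F b) \<in> B \<and> fst (F b) \<noteq> snd (F b) \<and> b + b = fst (F b) + snd (F b)"
    by blast
  define f1 where "f1 = (\<lambda>b. fst (F b))"
  define f2 where "f2 = (\<lambda>b. snd (F b))"
  have f: "\<And>v. v \<in> B \<Longrightarrow> f1 v \<in> B \<and> f2 v \<in> B \<and> f1 v \<noteq> f2 v \<and> v + v = f1 v + f2 v"
    using F unfolding f1_def f2_def by blast
  obtain r where rB: "r \<in> B" and reach: "\<forall>v\<in>B. \<exists>k. v \<in> layer f1 f2 B r k"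
    using root_exists[OF assms f] by blast
  define \<rho> where "\<rho> = (\<lambda>v. LEAST k. v \<in> layer f1 f2 B r k)"
  have r0: "\<rho> r = 0" unfolding \<rho>_def by (rule Least_eq_0) simp
  have rk: "\<rho> (f1 v) < \<rho> v \<or> \<rho> (f2 v) < \<rho> v" if vB: "v \<in> B" and vr: "v \<noteq> r" for v
  proof -
    obtain k0 where "v \<in> layer f1 f2 B r k0" using reach vB by blast
    hence vin: "v \<in> layer f1 f2 B r (\<rho> v)" unfolding \<rho>_def by (rule LeastI)
    have "\<rho> v \<noteq> 0" using vin vr by (metis layer.simps(1) singletonD)
    then obtain j where j: "\<rho> v = Suc j" by (metis not0_implies_Suc)
    have "v \<notin> layer f1 f2 B r j" unfolding \<rho>_def
      by (rule not_less_Least) (use j in \<open>simp add: \<rho>_def\<close>)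
    hence "f1 v \<in> layer f1 f2 B r j \<or> f2 v \<in> layer f1 f2 B r j" using vin j by auto
    hence "\<rho> (f1 v) \<le> j \<or> \<rho> (f2 v) \<le> j" unfolding \<rho>_def by (metis Least_le)
    thus ?thesis using j by auto
  qed
  have cardle: "card (gen_subgroup ((\<lambda>c. c + - r) ` B)) \<le> 2 ^ (card B - 1)"
    by (rule key[OF rB _ r0 rk]) (use f in auto)
  have "minspan B \<le> card (gen_subgroup ((\<lambda>c. c + - r) ` B))"
    unfolding minspan_def by (rule Least_le) blast
  hence ms: "minspan B \<le> 2 ^ (card B - 1)" using cardle by linarith
  have n1: "card B \<ge> 1" using rB card_gt_0_iff[of B] by auto
  have "log 2 (real (minspan B)) \<le> real (card B - 1)"
  proof (cases "minspan B = 0")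
    case True thus ?thesis by (simp add: log_def)
  next
    case False
    have "log 2 (real (minspan B)) \<le> log 2 (2 ^ (card B - 1))"
      using ms False by (subst log_le_cancel_iff) auto
    also have "\<dots> = real (card B - 1)" by (simp add: log_nat_power)
    finally show ?thesis .
  qed
  thus ?thesis using n1 by (simp add: of_nat_diff)
qed

end
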